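(* Let $n$ be a positive integer and let $G$ be a symmetric pure $(2n)$-sparse gapset of genus $3n+1$ with multiplicity $m$. Then $m+1\in G$.
   Context: A gapset is a finite set $G\subset\mathbb{N}=\{1,2,\dots\}$ such that whenever $z\in G$ and $z=x+y$ with $x,y\in\mathbb{N}$, then $x\in G$ or $y\in G$; its genus is $g=\#G$. Writing $G=\{\ell_1<\dots<\ell_g\}$, multiplicity $m(G)=\min\{s\in\mathbb{N}:s\notin G\}$, Frobenius number $F(G)=\ell_g$; $G$ is symmetric if $F(G)=2g-1$. $G$ is pure $\kappa$-sparse if $\ell_{i+1}-\ell_i\le\kappa$ for all $i$ with equality for some $i$. *)

theory Defs
  imports Main
begin

definition gapset :: "nat set \<Rightarrow> bool" where
  "gapset G \<longleftrightarrow> finite G \<and> 0 \<notin> G \<and>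
     (\<forall>z\<in>G. \<forall>x y. x \<ge> 1 \<and> y \<ge> 1 \<and> z = x + y \<longrightarrow> x \<in> G \<or> y \<in> G)"

definition genus :: "nat set \<Rightarrow> nat" where
  "genus G = card G"

definition multiplicity_gs :: "nat set \<Rightarrow> nat" where
  "multiplicity_gs G = (LEAST s. s \<ge> 1 \<and> s \<notin> G)"

text \<open>Frobenius number: largest element of G (the gap set is assumed nonempty when used).\<close>
definition frobenius :: "nat set \<Rightarrow> nat" where
  "frobenius G = Max G"

definition symmetric_gs :: "nat set \<Rightarrow> bool" where
  "symmetric_gs G \<longleftrightarrow> frobenius G = 2 * genus G - 1"

definition pure_sparse :: "nat \<Rightarrow> nat set \<Rightarrow> bool" where
  "pure_sparse \<kappa> G \<longleftrightarrow>
     (let l = sorted_list_of_set G in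
        (\<forall>i. i + 1 < length l \<longrightarrow> l ! (i + 1) - l ! i \<le> \<kappa>) \<and>
        (\<exists>i. i + 1 < length l \<and> l ! (i + 1) - l ! i = \<kappa>))"

end

theory Submission
  imports Defs
begin

lemma gs_split: "gapset G \<Longrightarrow> z \<in> G \<Longrightarrow> x \<ge> 1 \<Longrightarrow> y \<ge> 1 \<Longrightarrow> z = x + y \<Longrightarrow> x \<in> G \<or> y \<in> G"
  unfolding gapset_def by blast

lemma sym_hard:
  assumes gs: "gapset G" and ne: "G \<noteq> {}" and F: "Max G = 2 * card G - 1" and y: "y \<in> G"
  shows "Max G - y \<notin> G"
proof -
  define F where "F = Max G"
  have fin: "finite G" and z: "0 \<notin> G" using gs unfolding gapset_def by auto
  have FG: "F \<in> G" using fin ne F_def by simp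
  have le: "\<And>x. x \<in> G \<Longrightarrow> x \<le> F" using fin F_def by simp
  have sub: "G \<subseteq> {0..F}" using le by auto
  define A where "A = {0..F} - G"
  have cG: "card G \<ge> 1" using fin ne by (simp add: Suc_le_eq card_gt_0_iff)
  have cA: "card A = card G"
    unfolding A_def using card_Diff_subset[OF fin sub] F F_def cG by simp
  have inj: "inj_on (\<lambda>x. F - x) A" unfolding A_def inj_on_def by auto
  have img: "(\<lambda>x. F - x) ` A \<subseteq> G"
  proof
    fix w assume "w \<in> (\<lambda>x. F - x) ` A"
    then obtain x where x: "x \<in> A" "w = F - x" by auto
    show "w \<in> G"
    proof (cases "x = 0")
      case True then show ?thesis using x FG by simp
    next
      case False
      have "x \<noteq> F" using x FG A_def by auto
      hence "x < F" using x A_def by auto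
      hence "x \<in> G \<or> F - x \<in> G" using gs_split[OF gs FG, of x "F - x"] False by auto
      then show ?thesis using x A_def by auto
    qed
  qed
  have "card ((\<lambda>x. F - x) ` A) = card G" using card_image[OF inj] cA by simp
  hence eq: "(\<lambda>x. F - x) ` A = G" using card_subset_eq[OF fin img] by simp
  then obtain x where x: "x \<in> A" "y = F - x" using y by auto
  have "F - y = x" using x A_def by auto
  thus ?thesis using x A_def F_def by auto
qed


lemma ssort_less: "finite G \<Longrightarrow> l = sorted_list_of_set G \<Longrightarrow> i < length l \<Longrightarrow> j < length l \<Longrightarrow> l ! i < l ! j \<Longrightarrow> i < j"
  by (metis leI sorted_list_of_set(2) sorted_nth_mono not_le)

lemma consec_le:
  assumes fin: "finite G" and ps: "pure_sparse k G" and a: "a \<in> G" and b: "b \<in> G" and ab: "a < b"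
    and none: "\<forall>x. a < x \<and> x < b \<longrightarrow> x \<notin> G"
  shows "b - a \<le> k"
proof -
  define l where "l = sorted_list_of_set G"
  have sl: "set l = G" "sorted_wrt (<) l" using fin l_def by auto
  obtain i where i: "i < length l" "l ! i = a" using a sl by (metis in_set_conv_nth)
  obtain j where j: "j < length l" "l ! j = b" using b sl by (metis in_set_conv_nth)
  have ij: "i < j" using ssort_less[OF fin l_def i(1) j(1)] i j ab by simp
  have "j = i + 1"
  proof (rule ccontr)
    assume "j \<noteq> i + 1"
    hence lt: "i + 1 < j" using ij by simp
    have "l ! i < l ! (i+1)" using sl(2) lt j(1) by (simp add: sorted_wrt_nth_less)
    moreover have "l ! (i+1) < l ! j" using sl(2) lt j(1) by (simp add: sorted_wrt_nth_less)
    moreover have "l ! (i+1) \<in> G" using sl(1) lt j(1) by auto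
    ultimately show False using none i j by auto
  qed
  thus ?thesis using ps j i unfolding pure_sparse_def Let_def l_def[symmetric] by auto
qed

lemma exists_consec:
  assumes fin: "finite G" and ps: "pure_sparse k G"
  shows "\<exists>a b. a \<in> G \<and> b \<in> G \<and> b = a + k \<and> (\<forall>x. a < x \<and> x < b \<longrightarrow> x \<notin> G)"
proof -
  define l where "l = sorted_list_of_set G"
  have sl: "set l = G" "sorted_wrt (<) l" using fin l_def by auto
  obtain i where i: "i + 1 < length l" "l ! (i+1) - l ! i = k"
    using ps unfolding pure_sparse_def Let_def l_def[symmetric] by auto
  have lt: "l ! i < l ! (i+1)" using sl(2) i(1) by (simp add: sorted_wrt_nth_less)
  have none: "\<forall>x. l ! i < x \<and> x < l ! (i+1) \<longrightarrow> x \<notin> G"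
  proof (intro allI impI)
    fix x assume x: "l ! i < x \<and> x < l ! (i+1)"
    show "x \<notin> G"
    proof
      assume "x \<in> G"
      then obtain j where j: "j < length l" "l ! j = x" using sl by (metis in_set_conv_nth)
      have "i < j" using ssort_less[OF fin l_def _ j(1)] i(1) j x by simp
      moreover have "j < i + 1" using ssort_less[OF fin l_def j(1) i(1)] j x by simp
      ultimately show False by simp
    qed
  qed
  show ?thesis
    apply (rule exI[of _ "l ! i"], rule exI[of _ "l ! (i+1)"])
    using none lt i sl by (auto)
qed

lemma mult_notin: "gapset G \<Longrightarrow> m \<notin> G \<Longrightarrow> m \<ge> 1 \<Longrightarrow> Suc k * m \<notin> G"
proof (induction k)
  case 0 then show ?case by simp
next
  case (Suc k)
  show ?case
  proof
    assume "Suc (Suc k) * m \<in> G"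
    hence "Suc k * m \<in> G \<or> m \<in> G" using gs_split[OF Suc.prems(1), of "Suc (Suc k) * m" "Suc k*m" m] Suc.prems
      by simp
    thus False using Suc by auto
  qed
qed

lemma mult1_notin: "gapset G \<Longrightarrow> m \<notin> G \<Longrightarrow> m + 1 \<notin> G \<Longrightarrow> m \<ge> 1 \<Longrightarrow> Suc k * m + 1 \<notin> G"
proof (cases k)
  case 0 then show "gapset G \<Longrightarrow> m \<notin> G \<Longrightarrow> m + 1 \<notin> G \<Longrightarrow> m \<ge> 1 \<Longrightarrow> Suc k * m + 1 \<notin> G"
    by simp
next
  case (Suc i)
  assume gs: "gapset G" and m: "m \<notin> G" and m1: "m + 1 \<notin> G" and m0: "m \<ge> 1"
  show "Suc k * m + 1 \<notin> G"
  proof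
    assume "Suc k * m + 1 \<in> G"
    hence "Suc i * m \<in> G \<or> m + 1 \<in> G"
      using gs_split[OF gs, of "Suc k*m+1" "Suc i * m" "m+1"] Suc m0 by simp
    thus False using mult_notin[OF gs m m0, of i] m1 by auto
  qed
qed

theorem mainTheorem10:
  fixes n :: nat and G :: "nat set"
  assumes "n \<ge> 1"
    and "gapset G"
    and "symmetric_gs G"
    and "pure_sparse (2 * n) G"
    and "genus G = 3 * n + 1"
  shows "multiplicity_gs G + 1 \<in> G"
proof (rule ccontr)
  assume nm1: "multiplicity_gs G + 1 \<notin> G"
  note gs = assms(2)
  have fin: "finite G" and z0: "0 \<notin> G" using gs unfolding gapset_def by auto
  have cG: "card G = 3 * n + 1" using assms(5) genus_def by simp
  have ne: "G \<noteq> {}" using cG by auto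
  define F where "F = Max G"
  have Fv: "F = 6 * n + 1" using assms(3) cG unfolding symmetric_gs_def frobenius_def genus_def F_def by simp
  have symF: "Max G = 2 * card G - 1" using Fv cG F_def by simp
  have FG: "F \<in> G" using fin ne F_def by simp
  have leF: "\<And>x. x \<in> G \<Longrightarrow> x \<le> F" using fin F_def by simp
  define m where "m = multiplicity_gs G"
  have ex: "F + 1 \<ge> 1 \<and> F + 1 \<notin> G" using leF by fastforce
  have mprop: "m \<ge> 1 \<and> m \<notin> G" unfolding m_def multiplicity_gs_def by (rule LeastI[of _ "F+1"], rule ex)
  have below: "\<And>s. 1 \<le> s \<Longrightarrow> s < m \<Longrightarrow> s \<in> G"
    using not_less_Least unfolding m_def multiplicity_gs_def by blast
  have m0: "m \<ge> 1" and mG: "m \<notin> G" using mprop by auto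
  have m1G: "m + 1 \<notin> G" using nm1 m_def by simp
  have ne2: "G - {F} \<noteq> {}"
  proof
    assume "G - {F} = {}"
    hence "G \<subseteq> {F}" by auto
    hence "card G \<le> card {F}" by (intro card_mono) auto
    thus False using cG assms(1) by simp
  qed
  define p where "p = Max (G - {F})"
  have pG: "p \<in> G" and pF: "p \<noteq> F" using Max_in[OF _ ne2] fin p_def by auto
  have pltF: "p < F" using leF[OF pG] pF by simp
  have nonep: "\<forall>x. p < x \<and> x < F \<longrightarrow> x \<notin> G"
  proof (intro allI impI)
    fix x assume x: "p < x \<and> x < F"
    show "x \<notin> G"
    proof
      assume "x \<in> G"
      hence "x \<in> G - {F}" using x by auto
      hence "x \<le> p" using Max_ge fin p_def by auto
      thus False using x by simp
    qed
  qed
  have d1: "F - p \<le> 2 * n" using consec_le[OF fin assms(4) pG FG pltF nonep] .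
  have d2: "F - p \<notin> G" using sym_hard[OF gs ne symF pG] F_def by simp
  have "F - p \<ge> m"
  proof (rule ccontr)
    assume "\<not> m \<le> F - p"
    hence "F - p \<in> G" using below[of "F - p"] pltF by simp
    thus False using d2 by simp
  qed
  hence mle: "m \<le> 2 * n" using d1 by simp
  obtain a b where ab: "a \<in> G" "b \<in> G" "b = a + 2 * n" and noneab: "\<forall>x. a < x \<and> x < b \<longrightarrow> x \<notin> G"
    using exists_consec[OF fin assms(4)] by blast
  have bF: "b \<le> F" using leF ab by simp
  have a1: "a \<ge> 1" using ab(1) z0 by (cases a) auto
  define c where "c = F - b + 1"
  have c1: "c \<ge> 1" using c_def by simp
  have run: "\<And>t. c \<le> t \<Longrightarrow> t \<le> c + 2 * n - 2 \<Longrightarrow> t \<in> G"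
  proof -
    fix t assume t: "c \<le> t" "t \<le> c + 2 * n - 2"
    define x where "x = F - t"
    have xa: "a < x" "x < b" using t bF ab(3) assms(1) a1 unfolding x_def c_def by auto
    have xG: "x \<notin> G" using noneab xa by auto
    have x1: "x \<ge> 1" using xa by simp
    have tpos: "t \<ge> 1" using t c1 by simp
    have "F = x + t" using t bF xa unfolding x_def c_def by simp
    hence "x \<in> G \<or> t \<in> G" using gs_split[OF gs FG x1 tpos] by simp
    thus "t \<in> G" using xG by simp
  qed
  have mge: "m \<ge> 2 * n"
  proof (cases "c < m")
    case True
    show ?thesis
    proof (rule ccontr)
      assume "\<not> 2 * n \<le> m"
      hence "m \<le> c + 2 * n - 2" using True c1 by simp
      hence "m \<in> G" using run True by simp
      thus False using mG by simp
    qed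
  next
    case False
    define k where "k = c div m"
    define r where "r = c mod m"
    have cr: "c = k * m + r" using k_def r_def by simp
    have k1: "k \<ge> 1" using False m0 k_def by (simp add: div_greater_zero_iff Suc_le_eq)
    have rm: "r < m" using r_def m0 by simp
    have crun: "c \<in> G" using run[of c] assms(1) by simp
    show ?thesis
    proof (rule ccontr)
      assume lt: "\<not> 2 * n \<le> m"
      consider "r = 0" | "r = 1" | "r \<ge> 2" by linarith
      then show False
      proof cases
        case 1
        obtain j where "k = Suc j" using k1 by (cases k) auto
        then show False using mult_notin[OF gs mG m0, of j] crun cr 1 by simp
      next
        case 2
        obtain j where "k = Suc j" using k1 by (cases k) auto
        then show False using mult1_notin[OF gs mG m1G m0, of j] crun cr 2 by simp
      next
        case 3
        have "Suc k * m \<in> G" using run[of "Suc k * m"] cr rm 3 lt by simp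
        thus False using mult_notin[OF gs mG m0, of k] by simp
      qed
    qed
  qed
  have "m = 2 * n" using mle mge by simp
  hence "F = 3 * m + 1" using Fv by simp
  thus False using mult1_notin[OF gs mG m1G m0, of 2] FG by simp
qed

end
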